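(* Let $r\ge 3$ and let $G$ be a graph of order $n$ containing no complete subgraph $K_{r+1}$. Then $q_n(G)<\left(1-\frac{3}{3r-1}\right)n$, where $q_n(G)$ is the smallest eigenvalue of the signless Laplacian of $G$.
   Context: Graphs are finite and simple with $n\ge 1$ vertices. For a graph $G$ with adjacency matrix $A$ and diagonal degree matrix $D$, the signless Laplacian is $Q(G)=D+A$; $q_n(G)$ is its smallest eigenvalue. *)

theory Defs
  imports "HOL-Analysis.Analysis"
begin

text \<open>A finite simple graph on the vertex type 'n (n = CARD('n) vertices),
given by a symmetric irreflexive adjacency relation.\<close>

definition simple_graph :: "('n::finite \<Rightarrow> 'n \<Rightarrow> bool) \<Rightarrow> bool" where
  "simple_graph E \<longleftrightarrow> (\<forall>i j. E i j \<longrightarrow> E j i) \<and> (\<forall>i. \<not> E i i)"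

definition degree :: "('n::finite \<Rightarrow> 'n \<Rightarrow> bool) \<Rightarrow> 'n \<Rightarrow> nat" where
  "degree E i = card {j. E i j}"

definition adj_matrix :: "('n::finite \<Rightarrow> 'n \<Rightarrow> bool) \<Rightarrow> real^'n^'n" where
  "adj_matrix E = (\<chi> i j. if E i j then 1 else 0)"

definition deg_matrix :: "('n::finite \<Rightarrow> 'n \<Rightarrow> bool) \<Rightarrow> real^'n^'n" where
  "deg_matrix E = (\<chi> i j. if i = j then real (degree E i) else 0)"

definition signless_laplacian :: "('n::finite \<Rightarrow> 'n \<Rightarrow> bool) \<Rightarrow> real^'n^'n" where
  "signless_laplacian E = deg_matrix E + adj_matrix E"

definition is_eigenvalue :: "real^'n^'n \<Rightarrow> real \<Rightarrow> bool" where
  "is_eigenvalue M c \<longleftrightarrow> (\<exists>v. v \<noteq> 0 \<and> M *v v = c *\<^sub>R v)"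

definition q_min :: "('n::finite \<Rightarrow> 'n \<Rightarrow> bool) \<Rightarrow> real" where
  "q_min E = Min {c. is_eigenvalue (signless_laplacian E) c}"

definition contains_clique :: "('n::finite \<Rightarrow> 'n \<Rightarrow> bool) \<Rightarrow> nat \<Rightarrow> bool" where
  "contains_clique E k \<longleftrightarrow> (\<exists>S. card S = k \<and> (\<forall>x\<in>S. \<forall>y\<in>S. x \<noteq> y \<longrightarrow> E x y))"

end

theory Submission
  imports Defs
begin


lemma sym_inner:
  fixes M :: "real^'n^'n"
  assumes "transpose M = M"
  shows "x \<bullet> (M *v y) = y \<bullet> (M *v x)"
proof -
  have "x \<bullet> (M *v y) = (x v* M) \<bullet> y" by (simp add: dot_lmul_matrix)
  also have "x v* M = M *v x" by (metis assms vector_transpose_matrix)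
  finally show ?thesis by (simp add: inner_commute)
qed

lemma mv_scale: "(M::real^'n^'n) *v (a *\<^sub>R x) = a *\<^sub>R (M *v x)"
  by (simp add: linear_scale matrix_vector_mul_linear)
lemma mv_add: "(M::real^'n^'n) *v (x + y) = M *v x + M *v y"
  by (simp add: matrix_vector_right_distrib)

lemma min_eig:
  fixes M :: "real^'n^'n"
  assumes symm: "transpose M = M"
  shows "\<exists>c. is_eigenvalue M c \<and> (\<forall>x. c * (x \<bullet> x) \<le> x \<bullet> (M *v x))"
proof -
  define f where "f x = x \<bullet> (M *v x)" for x
  have cont: "continuous_on (sphere 0 1) f" unfolding f_def
    by (intro continuous_intros)
  have ne: "sphere (0::real^'n) 1 \<noteq> {}"
  proof -
    obtain b :: "real^'n" where "b \<in> Basis" using nonempty_Basis by blast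
    then have "norm b = 1" by simp
    then show ?thesis by auto
  qed
  obtain x0 where x0: "x0 \<in> sphere 0 1" and mn: "\<And>y. y \<in> sphere 0 1 \<Longrightarrow> f x0 \<le> f y"
    using continuous_attains_inf[OF compact_sphere ne cont] by blast
  define c where "c = f x0"
  have nx0: "norm x0 = 1" using x0 by simp
  have x00: "x0 \<bullet> x0 = 1" using nx0 by (simp add: norm_eq_1)
  have fsc: "f (a *\<^sub>R x) = a^2 * f x" for a x
    unfolding f_def by (simp add: mv_scale power2_eq_square)
  have low: "c * (x \<bullet> x) \<le> f x" for x
  proof (cases "x = 0")
    case True then show ?thesis by (simp add: f_def)
  next
    case False
    define y where "y = (1 / norm x) *\<^sub>R x"
    have "y \<in> sphere 0 1" using False by (simp add: y_def)
    then have "c \<le> f y" using mn c_def by blast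
    also have "f y = f x / (norm x)^2" using fsc y_def by (simp add: power2_eq_square)
    finally have "c * (norm x)^2 \<le> f x" using False by (simp add: field_simps)
    then show ?thesis by (simp add: power2_norm_eq_inner)
  qed
  define y where "y = M *v x0 - c *\<^sub>R x0"
  have "y = 0"
  proof (rule ccontr)
    assume yne: "y \<noteq> 0"
    define g where "g z = f z - c * (z \<bullet> z)" for z
    have gnn: "0 \<le> g z" for z using low[of z] by (simp add: g_def)
    have g0: "g x0 = 0" by (simp add: g_def c_def x00)
    have exp: "g (x0 + t *\<^sub>R y) = g x0 + 2 * t * (y \<bullet> y) + t^2 * g y" for t
    proof -
      have s: "x0 \<bullet> (M *v y) = y \<bullet> (M *v x0)" by (rule sym_inner[OF symm])
      have "g (x0 + t *\<^sub>R y) = f x0 + 2 * t * (y \<bullet> (M *v x0)) + t^2 * f y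
               - c * (x0 \<bullet> x0) - 2 * t * c * (y \<bullet> x0) - t^2 * c * (y \<bullet> y)"
        unfolding g_def f_def using s
        by (simp add: mv_scale mv_add inner_add_left inner_add_right algebra_simps power2_eq_square inner_commute)
      moreover have "y \<bullet> (M *v x0) = y \<bullet> y + c * (y \<bullet> x0)"
        by (simp add: y_def inner_diff_right)
      moreover have "x0 \<bullet> y = y \<bullet> x0" by (rule inner_commute)
      ultimately show ?thesis by (simp add: g_def algebra_simps power2_eq_square)
    qed
    define yy where "yy = y \<bullet> y"
    have yy: "yy > 0" using yne by (simp add: yy_def)
    define s where "s = yy / (\<bar>g y\<bar> + 1)"
    have spos: "s > 0" using yy by (simp add: s_def)
    have "0 \<le> g (x0 + (-s) *\<^sub>R y)" by (rule gnn)
    then have "0 \<le> -2 * s * yy + s^2 * g y" using exp[of "-s"] g0 by (simp add: yy_def)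
    then have "2 * yy \<le> s * g y" using spos by (simp add: power2_eq_square algebra_simps)
    also have "s * g y \<le> s * \<bar>g y\<bar>" using spos by (simp add: mult_left_mono)
    also have "s * \<bar>g y\<bar> < yy"
    proof -
      have "s * \<bar>g y\<bar> = yy * (\<bar>g y\<bar> / (\<bar>g y\<bar> + 1))" by (simp add: s_def)
      also have "\<dots> < yy * 1" using yy by (intro mult_strict_left_mono) auto
      finally show ?thesis by simp
    qed
    finally show False using yy by simp
  qed
  then have "M *v x0 = c *\<^sub>R x0" by (simp add: y_def)
  moreover have "x0 \<noteq> 0" using nx0 by auto
  ultimately have "is_eigenvalue M c" unfolding is_eigenvalue_def by blast
  then show ?thesis using low unfolding f_def by blast
qed

lemma eig_finite:
  fixes M :: "real^'n^'n"
  assumes symm: "transpose M = M"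
  shows "finite {c. is_eigenvalue M c}"
proof -
  define C where "C = {c. is_eigenvalue M c}"
  define v where "v c = (SOME v. v \<noteq> 0 \<and> M *v v = c *\<^sub>R v)" for c
  have v: "v c \<noteq> 0 \<and> M *v v c = c *\<^sub>R v c" if "c \<in> C" for c
    using that unfolding C_def is_eigenvalue_def v_def by (metis (mono_tags, lifting) someI_ex mem_Collect_eq)
  have inj: "inj_on v C"
  proof (rule inj_onI)
    fix a b assume a: "a \<in> C" and b: "b \<in> C" and e: "v a = v b"
    have "a *\<^sub>R v a = b *\<^sub>R v a" using v[OF a] v[OF b] e by metis
    then show "a = b" using v[OF a] by (simp add: scaleR_cancel_right)
  qed
  have orth: "pairwise orthogonal (v ` C)"
  proof (clarsimp simp: pairwise_def)
    fix a b assume a: "a \<in> C" and b: "b \<in> C" and ne: "v a \<noteq> v b"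
    have "a \<noteq> b" using ne by auto
    have "v a \<bullet> (M *v v b) = v b \<bullet> (M *v v a)" by (rule sym_inner[OF symm])
    then have "b * (v a \<bullet> v b) = a * (v a \<bullet> v b)" using v[OF a] v[OF b] by (simp add: inner_commute)
    then have "v a \<bullet> v b = 0" using \<open>a \<noteq> b\<close> by simp
    then show "orthogonal (v a) (v b)" by (simp add: orthogonal_def)
  qed
  have "0 \<notin> v ` C" using v by auto
  then have "independent (v ` C)" using orth pairwise_orthogonal_independent by blast
  then have "finite (v ` C)" using independent_bound by blast
  then have "finite C" using inj finite_imageD by blast
  then show ?thesis by (simp add: C_def)
qed



lemma Q_sym: assumes "simple_graph E" shows "transpose (signless_laplacian E) = signless_laplacian E"
  using assms unfolding simple_graph_def signless_laplacian_def deg_matrix_def adj_matrix_def transpose_def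
  by (auto simp: vec_eq_iff)

lemma Qv: "(signless_laplacian E *v x) $ i = real (degree E i) * x$i + (\<Sum>j\<in>{j. E i j}. x$j)"
proof -
  have "(signless_laplacian E *v x) $ i = (\<Sum>j\<in>UNIV. (if i = j then real (degree E i) else 0) * x$j) + (\<Sum>j\<in>UNIV. (if E i j then 1 else 0) * x$j)"
    unfolding signless_laplacian_def deg_matrix_def adj_matrix_def matrix_vector_mult_def
    by (simp add: distrib_right sum.distrib)
  also have "(\<Sum>j\<in>UNIV. (if i = j then real (degree E i) else 0) * x$j) = real (degree E i) * x$i"
  proof -
    have "(\<Sum>j\<in>UNIV. (if i = j then real (degree E i) else 0) * x$j) = (\<Sum>j\<in>UNIV. if j = i then real (degree E i) * x$j else 0)"
      by (rule sum.cong) auto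
    then show ?thesis by simp
  qed
  also have "(\<Sum>j\<in>UNIV. (if E i j then 1 else 0) * x$j) = (\<Sum>j\<in>{j. E i j}. x$j)"
  proof -
    have "(\<Sum>j\<in>UNIV. (if E i j then 1 else 0) * x$j) = (\<Sum>j\<in>UNIV. if E i j then x$j else 0)"
      by (rule sum.cong) auto
    then show ?thesis by (simp add: sum.inter_filter[symmetric])
  qed
  finally show ?thesis .
qed

lemma quad: "x \<bullet> (signless_laplacian E *v x) = (\<Sum>i\<in>UNIV. \<Sum>j\<in>{j. E i j}. x$i * (x$i + x$j))"
proof -
  have "x \<bullet> (signless_laplacian E *v x) = (\<Sum>i\<in>UNIV. x$i * (signless_laplacian E *v x)$i)"
    by (simp add: inner_vec_def)
  also have "\<dots> = (\<Sum>i\<in>UNIV. \<Sum>j\<in>{j. E i j}. x$i * (x$i + x$j))"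
  proof (rule sum.cong[OF refl])
    fix i
    have "(\<Sum>j\<in>{j. E i j}. x$i * (x$i + x$j)) = real (card {j. E i j}) * (x$i * x$i) + x$i * (\<Sum>j\<in>{j. E i j}. x$j)"
      by (simp add: distrib_left sum.distrib sum_distrib_left)
    then show "x$i * (signless_laplacian E *v x)$i = (\<Sum>j\<in>{j. E i j}. x$i * (x$i + x$j))"
      by (simp add: Qv degree_def algebra_simps)
  qed
  finally show ?thesis .
qed

lemma quad_axis: assumes "simple_graph E"
  shows "axis v 1 \<bullet> (signless_laplacian E *v axis v (1::real)) = real (degree E v)"
proof -
  have irr: "\<not> E v v" using assms by (simp add: simple_graph_def)
  have "(\<Sum>i\<in>UNIV. \<Sum>j\<in>{j. E i j}. axis v (1::real) $ i * (axis v 1 $ i + axis v 1 $ j))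
      = (\<Sum>j\<in>{j. E v j}. axis v (1::real) $ v * (axis v 1 $ v + axis v 1 $ j))"
  proof -
    have "(\<Sum>i\<in>UNIV. \<Sum>j\<in>{j. E i j}. axis v (1::real) $ i * (axis v 1 $ i + axis v 1 $ j))
       = (\<Sum>i\<in>UNIV. if i = v then (\<Sum>j\<in>{j. E v j}. axis v (1::real) $ v * (axis v 1 $ v + axis v 1 $ j)) else 0)"
      by (rule sum.cong) (auto simp: axis_def)
    then show ?thesis by simp
  qed
  also have "\<dots> = (\<Sum>j\<in>{j. E v j}. 1)"
    by (rule sum.cong) (auto simp: axis_def irr)
  finally show ?thesis by (simp add: quad degree_def)
qed

lemma axis_norm: "axis v (1::real) \<bullet> axis v 1 = 1"
  by (simp add: inner_axis_axis)

definition indv :: "'n::finite set \<Rightarrow> 'n set \<Rightarrow> real^'n" where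
  "indv A B = (\<chi> i. if i \<in> A then 1 else if i \<in> B then -1 else 0)"

lemma indv_norm: assumes "A \<inter> B = {}"
  shows "indv A B \<bullet> indv A B = real (card A) + real (card B)"
proof -
  have "indv A B \<bullet> indv A B = (\<Sum>i\<in>UNIV. if i \<in> A \<union> B then 1 else 0)"
    unfolding inner_vec_def indv_def by (rule sum.cong) auto
  also have "\<dots> = real (card (A \<union> B))" by (simp add: sum.If_cases Collect_disj_eq)
  also have "\<dots> = real (card A) + real (card B)" using assms by (simp add: card_Un_disjoint)
  finally show ?thesis .
qed

lemma indv_quad:
  fixes A B :: "'n::finite set"
  assumes "A \<inter> B = {}" and iA: "\<And>u w. u \<in> A \<Longrightarrow> w \<in> A \<Longrightarrow> \<not> E u w"
    and iB: "\<And>u w. u \<in> B \<Longrightarrow> w \<in> B \<Longrightarrow> \<not> E u w"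
  shows "indv A B \<bullet> (signless_laplacian E *v indv A B)
     \<le> (real (card A) + real (card B)) * (real CARD('n) - real (card A) - real (card B))"
proof -
  define x where "x = indv A B"
  define R where "R = UNIV - (A \<union> B)"
  have cR: "real (card R) = real CARD('n) - real (card A) - real (card B)"
  proof -
    have "card R = CARD('n) - card (A \<union> B)" unfolding R_def by (simp add: card_Diff_subset)
    moreover have "card (A \<union> B) \<le> CARD('n)" by (rule card_mono) auto
    ultimately show ?thesis using assms(1) by (simp add: card_Un_disjoint of_nat_diff)
  qed
  have trm: "x$i * (x$i + x$j) \<le> (if j \<in> R then 1 else 0)" if "i \<in> A \<union> B" "E i j" for i j
    using that iA iB assms(1) unfolding x_def indv_def R_def by auto
  have "x \<bullet> (signless_laplacian E *v x) = (\<Sum>i\<in>UNIV. \<Sum>j\<in>{j. E i j}. x$i * (x$i + x$j))"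
    by (rule quad)
  also have "\<dots> \<le> (\<Sum>i\<in>UNIV. if i \<in> A \<union> B then real (card R) else 0)"
  proof (rule sum_mono)
    fix i
    show "(\<Sum>j\<in>{j. E i j}. x$i * (x$i + x$j)) \<le> (if i \<in> A \<union> B then real (card R) else 0)"
    proof (cases "i \<in> A \<union> B")
      case True
      have "(\<Sum>j\<in>{j. E i j}. x$i * (x$i + x$j)) \<le> (\<Sum>j\<in>{j. E i j}. if j \<in> R then 1 else 0)"
        by (rule sum_mono) (use trm True in auto)
      also have "\<dots> \<le> (\<Sum>j\<in>UNIV. if j \<in> R then (1::real) else 0)"
        by (rule sum_mono2) auto
      also have "\<dots> = real (card R)" by (simp add: sum.If_cases)
      finally show ?thesis using True by simp
    next
      case False
      then have "x$i = 0" unfolding x_def indv_def by auto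
      then show ?thesis using False by simp
    qed
  qed
  also have "\<dots> = real (card (A \<union> B)) * real (card R)" by (simp add: sum.If_cases Collect_disj_eq)
  also have "\<dots> = (real (card A) + real (card B)) * (real CARD('n) - real (card A) - real (card B))"
    using assms(1) cR by (simp add: card_Un_disjoint)
  finally show ?thesis unfolding x_def .
qed


lemma fin_arith:
  fixes s r n c :: real
  assumes "2 \<le> s" "s \<le> r" "3 \<le> r" "1 \<le> n" "3 * s * c \<le> (3 * s - 4) * n"
  shows "c < (1 - 3 / (3 * r - 1)) * n"
proof -
  have "c \<le> n - 4 * n / (3 * s)" using assms by (simp add: field_simps)
  also have "4 * n / (3 * s) \<ge> 4 * n / (3 * r)" using assms by (intro divide_left_mono) auto
  then have "n - 4 * n / (3 * s) \<le> n - 4 * n / (3 * r)" by simp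
  also have "n - 4 * n / (3 * r) < n - 3 * n / (3 * r - 1)"
  proof -
    have "3 * n / (3 * r - 1) < 4 * n / (3 * r)" using assms by (simp add: field_simps)
    then show ?thesis by simp
  qed
  also have "\<dots> = (1 - 3 / (3 * r - 1)) * n" by (simp add: algebra_simps)
  finally show ?thesis .
qed


theorem theorem6:
  fixes E :: "'n::finite \<Rightarrow> 'n \<Rightarrow> bool" and r :: nat
  assumes "simple_graph E"
    and "r \<ge> 3"
    and "\<not> contains_clique E (r + 1)"
  shows "q_min E < (1 - 3 / (3 * real r - 1)) * real CARD('n)"
proof -
  define n where "n = real CARD('n)"
  have sym: "E i j \<Longrightarrow> E j i" for i j using assms(1) by (auto simp: simple_graph_def)
  have irr: "\<not> E i i" for i using assms(1) by (auto simp: simple_graph_def)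
  have n1: "1 \<le> n" unfolding n_def by (simp add: Suc_le_eq)
  obtain c where eig: "is_eigenvalue (signless_laplacian E) c"
    and low: "\<And>x. c * (x \<bullet> x) \<le> x \<bullet> (signless_laplacian E *v x)"
    using min_eig[OF Q_sym[OF assms(1)]] by blast
  have qc: "q_min E \<le> c" unfolding q_min_def
    using eig_finite[OF Q_sym[OF assms(1)]] eig by (intro Min_le) auto
  have degc: "c \<le> real (degree E v)" for v
    using low[of "axis v 1"] quad_axis[OF assms(1), of v] axis_norm[of v] by simp
  define clq where "clq S \<longleftrightarrow> (\<forall>x\<in>S. \<forall>y\<in>S. x \<noteq> y \<longrightarrow> E x y)" for S :: "'n set"
  have bnd: "card S \<le> r" if "clq S" for S
  proof (rule ccontr)
    assume "\<not> card S \<le> r"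
    then have "r + 1 \<le> card S" by simp
    then obtain S' where "S' \<subseteq> S" "card S' = r + 1" by (metis obtain_subset_with_card_n)
    then have "contains_clique E (r + 1)" using that unfolding contains_clique_def clq_def by blast
    then show False using assms(3) by simp
  qed
  define s where "s = Max (card ` {S. clq S})"
  have finc: "finite (card ` {S. clq S})" by simp
  have "clq {}" by (simp add: clq_def)
  then have nec: "card ` {S. clq S} \<noteq> {}" by blast
  obtain K where K: "clq K" "card K = s"
    using Max_in[OF finc nec] unfolding s_def by auto
  have maxc: "card S \<le> s" if "clq S" for S
    unfolding s_def using that finc by (intro Max_ge) auto
  have sr: "s \<le> r" using bnd K by auto
  have T: "0 < (1 - 3 / (3 * real r - 1)) * n"
  proof -
    have "3 / (3 * real r - 1) < 1" using assms(2) by (simp add: field_simps)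
    then show ?thesis using n1 by simp
  qed
  have "c < (1 - 3 / (3 * real r - 1)) * n"
  proof (cases "\<exists>u v. E u v")
    case False
    then have "degree E undefined = 0" by (simp add: degree_def)
    then show ?thesis using degc[of undefined] T by simp
  next
    case True
    then obtain u0 v0 where "E u0 v0" by blast
    then have "u0 \<noteq> v0" "clq {u0, v0}" using irr sym by (auto simp: clq_def)
    then have s2: "2 \<le> s" using maxc[of "{u0, v0}"] by simp
    have finK: "finite K" by simp
    define V where "V k = {u. \<not> E u k \<and> (\<forall>k'\<in>K - {k}. E u k')}" for k
    have Vin: "k \<in> V k" if "k \<in> K" for k
      using K(1) that irr unfolding V_def clq_def by auto
    have Vdisj: "V k \<inter> V j = {}" if "k \<in> K" "j \<in> K" "k \<noteq> j" for k j
      using that unfolding V_def by auto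
    have Vind: "\<not> E u w" if k: "k \<in> K" and u: "u \<in> V k" and w: "w \<in> V k" for k u w
    proof
      assume euw: "E u w"
      have uw: "u \<noteq> w" using euw irr by auto
      have uK: "u \<notin> K - {k}" using u irr unfolding V_def by auto
      have wK: "w \<notin> K - {k}" using w irr unfolding V_def by auto
      define S where "S = insert u (insert w (K - {k}))"
      have "card S = s + 1"
      proof -
        have "card (K - {k}) = s - 1" using K(2) k by simp
        then show ?thesis using uK wK uw s2 unfolding S_def by simp
      qed
      moreover have "clq S"
        unfolding S_def clq_def
      proof (intro ballI impI)
        fix x y assume x: "x \<in> insert u (insert w (K - {k}))" and y: "y \<in> insert u (insert w (K - {k}))"
          and xy: "x \<noteq> y"
        have Ku: "\<forall>k'\<in>K - {k}. E u k'" and Kw: "\<forall>k'\<in>K - {k}. E w k'" using u w unfolding V_def by auto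
        show "E x y" using x y xy Ku Kw euw sym K(1) unfolding clq_def by blast
      qed
      ultimately show False using maxc by fastforce
    qed
    define U where "U = (\<Union>k\<in>K. V k)"
    define a where "a k = real (card (V k))" for k
    define Msum where "Msum = (\<Sum>k\<in>K. a k)"
    have cardU: "real (card U) = Msum"
      unfolding U_def Msum_def a_def using Vdisj
      by (subst card_UN_disjoint) auto
    have Wb: "real (card {k\<in>K. E u k}) \<le> real s - 1 - (if u \<in> U then 0 else 1)" for u
    proof -
      define N where "N = {k\<in>K. E u k}"
      have NK: "N \<subseteq> K" by (auto simp: N_def)
      have "N \<noteq> K"
      proof
        assume NKe: "N = K"
        then have "u \<notin> K" using irr by (auto simp: N_def)
        moreover have "clq (insert u K)" using NKe K(1) sym unfolding clq_def N_def by blast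
        ultimately have "card (insert u K) \<le> s" using maxc by blast
        then show False using \<open>u \<notin> K\<close> K(2) by simp
      qed
      then have lt: "card N < s" using NK K(2) by (metis psubsetI psubset_card_mono finK)
      show ?thesis
      proof (cases "u \<in> U")
        case True then show ?thesis using lt s2 by (simp add: N_def[symmetric])
      next
        case False
        have "card N \<noteq> s - 1"
        proof
          assume cN: "card N = s - 1"
          have "card (K - N) = 1" using cN K(2) NK s2 by (simp add: card_Diff_subset)
          then obtain k where kk: "K - N = {k}" by (metis card_1_singletonE)
          then have "k \<in> K" "\<not> E u k" by (auto simp: N_def)
          moreover have "\<forall>k'\<in>K - {k}. E u k'" using kk by (auto simp: N_def)
          ultimately have "u \<in> U" unfolding U_def V_def by blast
          then show False using False by simp
        qed
        then have "card N \<le> s - 2" using lt by simp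
        then have "real (card N) \<le> real s - 2" using s2 by linarith
        then show ?thesis using False by (simp add: N_def[symmetric])
      qed
    qed
    have degsum: "(\<Sum>k\<in>K. real (degree E k)) = (\<Sum>u\<in>UNIV. real (card {k\<in>K. E u k}))"
    proof -
      have "(\<Sum>k\<in>K. real (degree E k)) = (\<Sum>k\<in>K. \<Sum>u\<in>UNIV. if E k u then 1 else 0)"
        unfolding degree_def by (intro sum.cong refl) (simp add: sum.If_cases)
      also have "\<dots> = (\<Sum>u\<in>UNIV. \<Sum>k\<in>K. if E k u then 1 else 0)" by (rule sum.swap)
      also have "\<dots> = (\<Sum>u\<in>UNIV. real (card {k\<in>K. E u k}))"
      proof (intro sum.cong refl)
        fix u
        have "(\<Sum>k\<in>K. if E k u then 1 else (0::real)) = (\<Sum>k\<in>K. if E u k then 1 else 0)"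
          using sym by (intro sum.cong refl) (auto dest: sym)
        also have "\<dots> = real (card {k\<in>K. E u k})" by (simp add: sum.If_cases Int_def)
        finally show "(\<Sum>k\<in>K. if E k u then 1 else (0::real)) = real (card {k\<in>K. E u k})" .
      qed
      finally show ?thesis .
    qed
    have ineq1: "real s * c \<le> (real s - 2) * n + Msum"
    proof -
      have "real s * c = (\<Sum>k\<in>K. c)" using K(2) by simp
      also have "\<dots> \<le> (\<Sum>k\<in>K. real (degree E k))" by (rule sum_mono) (rule degc)
      also have "\<dots> \<le> (\<Sum>u\<in>UNIV. real s - 1 - (if u \<in> U then 0 else 1))"
        unfolding degsum by (rule sum_mono) (rule Wb)
      also have "\<dots> = n * (real s - 1) - real (card (UNIV - U))"
        by (simp add: sum_subtractf sum.If_cases n_def Diff_eq Compl_eq)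
      also have "real (card (UNIV - U)) = n - Msum"
        using cardU by (simp add: card_Diff_subset n_def of_nat_diff card_mono)
      finally show ?thesis by (simp add: algebra_simps)
    qed
    have pair: "c \<le> n - a k - a j" if "k \<in> K" "j \<in> K" "k \<noteq> j" for k j
    proof -
      have ak: "a k \<ge> 1" using Vin[OF that(1)] unfolding a_def
        by (auto simp: Suc_le_eq card_gt_0_iff)
      have aj: "a j \<ge> 0" by (simp add: a_def)
      have "c * (a k + a j) \<le> (a k + a j) * (n - a k - a j)"
        using low[of "indv (V k) (V j)"] indv_norm[OF Vdisj[OF that]]
          indv_quad[OF Vdisj[OF that], of E] Vind[OF that(1)] Vind[OF that(2)]
        unfolding a_def n_def by fastforce
      then show ?thesis using ak aj by (simp add: mult.commute)
    qed
    have ineq2: "real s * (real s - 1) * c \<le> real s * (real s - 1) * n - 2 * (real s - 1) * Msum"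
    proof -
      have "real s * (real s - 1) * c = (\<Sum>k\<in>K. \<Sum>j\<in>K - {k}. c)"
        using K(2) s2 by (simp add: card_Diff_subset of_nat_diff)
      also have "\<dots> \<le> (\<Sum>k\<in>K. \<Sum>j\<in>K - {k}. n - a k - a j)"
        by (intro sum_mono) (auto intro: pair)
      also have "\<dots> = (\<Sum>k\<in>K. (real s - 1) * (n - a k) - (Msum - a k))"
      proof (intro sum.cong refl)
        fix k assume k: "k \<in> K"
        have "(\<Sum>j\<in>K - {k}. n - a k - a j) = (\<Sum>j\<in>K - {k}. n - a k) - (\<Sum>j\<in>K - {k}. a j)"
          by (simp add: sum_subtractf)
        also have "(\<Sum>j\<in>K - {k}. a j) = Msum - a k" unfolding Msum_def using k by (simp add: sum_diff1)
        also have "(\<Sum>j\<in>K - {k}. n - a k) = (real s - 1) * (n - a k)"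
          using k K(2) s2 by (simp add: card_Diff_subset of_nat_diff)
        finally show "(\<Sum>j\<in>K - {k}. n - a k - a j) = (real s - 1) * (n - a k) - (Msum - a k)" .
      qed
      also have "\<dots> = real s * (real s - 1) * n - 2 * (real s - 1) * Msum"
      proof -
        have h1: "(\<Sum>k\<in>K. a k * 2) = Msum * 2" by (simp add: Msum_def sum_distrib_right)
        have h2: "(\<Sum>k\<in>K. real s * (a k * 2)) = real s * (Msum * 2)" by (simp add: Msum_def sum_distrib_left sum_distrib_right mult.assoc)
        show ?thesis
          using K(2) h1 h2 by (simp add: sum_subtractf sum.distrib sum_distrib_left right_diff_distrib Msum_def algebra_simps)
      qed
      finally show ?thesis .
    qed
    have ineq3: "real s * c \<le> real s * n - 2 * Msum"
    proof -
      have "(real s - 1) * (real s * c) \<le> (real s - 1) * (real s * n - 2 * Msum)"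
        using ineq2 by (simp add: algebra_simps)
      moreover have "real s - 1 > 0" using s2 by simp
      ultimately show ?thesis by simp
    qed
    have "3 * real s * c \<le> (3 * real s - 4) * n" using ineq1 ineq3 by (simp add: algebra_simps)
    then show ?thesis using fin_arith[of "real s" "real r" n c] s2 sr assms(2) n1 by simp
  qed
  then show ?thesis using qc n_def by simp
qed

end
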